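(* The maximal absolute projection constant in dimension $5$ satisfies $$\lambda(5)\ \ge\ \lambda(5,16)\ \ge\ \frac{5}{59}\left(11+6\sqrt5\right)\approx 2.06919.$$
   Context: For a real Banach space $X$ and finite-dimensional subspace $Y$, $\lambda(Y,X)=\inf\{\|P\|\}$ over bounded linear projections $P:X\to Y$ (i.e. $P|_Y=\mathrm{Id}_Y$). The absolute projection constant is $\lambda(Y)=\sup\{\lambda(Y,X): Y\subset X\}$ over all real Banach superspaces $X$, and $\lambda(m)=\sup\{\lambda(Y):\dim Y=m\}$. For integers $n\ge m$, $\lambda(m,n):=\sup\{\lambda(Y,\ell_\infty^{(n)}): Y\subset\ell_\infty^{(n)},\ \dim Y=m\}$, where $\ell_\infty^{(n)}$ is $\mathbb{R}^n$ with the max norm. *)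

theory Defs
  imports "HOL-Analysis.Analysis" "HOL-Library.Function_Algebras"
begin

(* Pointwise real vector space structure on functions (needed only to have a
   universe type (real => real) large enough to contain copies of all the
   Banach superspaces relevant for the absolute projection constant). *)
instantiation "fun" :: (type, real_vector) real_vector
begin
definition scaleR_fun :: "real \<Rightarrow> ('a \<Rightarrow> 'b) \<Rightarrow> 'a \<Rightarrow> 'b"
  where "scaleR_fun c f = (\<lambda>x. c *\<^sub>R f x)"
instance
  by standard (auto simp: scaleR_fun_def fun_eq_iff scaleR_add_right scaleR_add_left)
end

definition is_norm_on :: "('a::real_vector \<Rightarrow> real) \<Rightarrow> 'a set \<Rightarrow> bool" where
  "is_norm_on N X \<longleftrightarrow> subspace X \<and>
     (\<forall>x\<in>X. 0 \<le> N x) \<and> (\<forall>x\<in>X. N x = 0 \<longleftrightarrow> x = 0) \<and>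
     (\<forall>x\<in>X. \<forall>c. N (c *\<^sub>R x) = \<bar>c\<bar> * N x) \<and>
     (\<forall>x\<in>X. \<forall>y\<in>X. N (x + y) \<le> N x + N y)"

definition is_banach_on :: "('a::real_vector \<Rightarrow> real) \<Rightarrow> 'a set \<Rightarrow> bool" where
  "is_banach_on N X \<longleftrightarrow> is_norm_on N X \<and>
     (\<forall>s::nat \<Rightarrow> 'a. (\<forall>n. s n \<in> X) \<longrightarrow>
        (\<forall>e>0. \<exists>M. \<forall>m\<ge>M. \<forall>n\<ge>M. N (s m - s n) < e) \<longrightarrow>
        (\<exists>l\<in>X. \<forall>e>0. \<exists>M. \<forall>n\<ge>M. N (s n - l) < e))"

definition is_bounded_proj :: "('a::real_vector \<Rightarrow> real) \<Rightarrow> 'a set \<Rightarrow> 'a set \<Rightarrow> ('a \<Rightarrow> 'a) \<Rightarrow> bool" where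
  "is_bounded_proj N X Y P \<longleftrightarrow>
     (\<forall>x\<in>X. \<forall>y\<in>X. P (x + y) = P x + P y) \<and>
     (\<forall>x\<in>X. \<forall>c. P (c *\<^sub>R x) = c *\<^sub>R P x) \<and>
     P ` X \<subseteq> Y \<and> (\<forall>y\<in>Y. P y = y) \<and>
     (\<exists>K. \<forall>x\<in>X. N (P x) \<le> K * N x)"

definition op_norm_on :: "('a::real_vector \<Rightarrow> real) \<Rightarrow> 'a set \<Rightarrow> ('a \<Rightarrow> 'a) \<Rightarrow> real" where
  "op_norm_on N X P = Sup {N (P x) | x. x \<in> X \<and> N x \<le> 1}"

definition rel_proj_const :: "('a::real_vector \<Rightarrow> real) \<Rightarrow> 'a set \<Rightarrow> 'a set \<Rightarrow> real" where
  "rel_proj_const N X Y = Inf {op_norm_on N X P | P. is_bounded_proj N X Y P}"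

(* lambda(m): supremum of lambda(Y, X) over all m-dimensional Y contained in a
   real Banach space X; the Banach spaces are realised as linear subspaces of
   the universe (real => real) carrying an arbitrary complete norm. *)
definition lambda_abs :: "nat \<Rightarrow> real" where
  "lambda_abs m = Sup {rel_proj_const N X Y | N X (Y :: (real \<Rightarrow> real) set).
       is_banach_on N X \<and> subspace Y \<and> Y \<subseteq> X \<and> dim Y = m}"

(* l_infinity^(n): R^n realised as functions nat => real vanishing from index n on,
   with the max norm *)
definition linf_space :: "nat \<Rightarrow> (nat \<Rightarrow> real) set" where
  "linf_space n = {x. \<forall>i\<ge>n. x i = 0}"

definition linf_norm :: "nat \<Rightarrow> (nat \<Rightarrow> real) \<Rightarrow> real" where
  "linf_norm n x = Max (insert 0 {\<bar>x i\<bar> | i. i < n})"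

definition lambda_mn :: "nat \<Rightarrow> nat \<Rightarrow> real" where
  "lambda_mn m n = Sup {rel_proj_const (linf_norm n) (linf_space n) Y | Y.
       subspace Y \<and> Y \<subseteq> linf_space n \<and> dim Y = m}"

end

theory Submission
  imports Defs
begin

lemma aux_mul1:
  fixes t c P a :: real
  assumes "0 < t" "c \<le> P - inverse t * a"
  shows "t * c \<le> t * P - a"
proof -
  have "t * c \<le> t * (P - inverse t * a)" using assms by (simp add: mult_left_mono)
  also have "\<dots> = t * P - a" using assms(1) by (simp add: algebra_simps)
  finally show ?thesis .
qed

lemma aux_mul2:
  fixes s c P a :: real
  assumes "0 < s" "inverse s * a - P \<le> c"
  shows "a - s * P \<le> s * c"
proof -
  have "s * (inverse s * a - P) \<le> s * c" using assms by (simp add: mult_left_mono)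
  moreover have "s * (inverse s * a - P) = a - s * P" using assms(1) by (simp add: algebra_simps)
  ultimately show ?thesis by simp
qed

lemma hb_graph:
  fixes p :: "'a::real_vector \<Rightarrow> real"
  assumes X: "subspace X"
    and sub: "\<And>x y. x \<in> X \<Longrightarrow> y \<in> X \<Longrightarrow> p (x + y) \<le> p x + p y"
    and hom: "\<And>x c. x \<in> X \<Longrightarrow> c \<ge> 0 \<Longrightarrow> p (c *\<^sub>R x) = c * p x"
    and b: "b \<in> X"
  shows "\<exists>F. (\<forall>x\<in>X. \<forall>y\<in>X. F (x + y) = F x + F y) \<and> (\<forall>x\<in>X. \<forall>c. F (c *\<^sub>R x) = c * F x)
          \<and> (\<forall>x\<in>X. F x \<le> p x) \<and> F b = p b"
proof -
  have p0: "p 0 = 0" using hom[of 0 0] X by (simp add: subspace_0)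
  define G0 where "G0 = {(t *\<^sub>R b, t * p b) | t. True}"
  define A where "A = {G. G \<subseteq> X \<times> UNIV \<and> G0 \<subseteq> G \<and>
      (\<forall>x a y c. (x,a) \<in> G \<longrightarrow> (y,c) \<in> G \<longrightarrow> (x + y, a + c) \<in> G) \<and>
      (\<forall>x a r. (x,a) \<in> G \<longrightarrow> (r *\<^sub>R x, r * a) \<in> G) \<and>
      (\<forall>x a. (x,a) \<in> G \<longrightarrow> a \<le> p x)}"
  have pneg: "- p x \<le> p (- x)" if "x \<in> X" for x
    using sub[of x "-x"] that X p0 by (simp add: subspace_neg)
  have G0A: "G0 \<in> A"
  proof -
    have "t * p b \<le> p (t *\<^sub>R b)" for t
    proof (cases "t \<ge> 0")
      case True then show ?thesis using hom[OF b] by simp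
    next
      case False
      then have "p (t *\<^sub>R b) = (-t) * p (- b)"
        using hom[of "-b" "-t"] b X by (simp add: subspace_neg)
      moreover have "- p b \<le> p (-b)" using pneg[OF b] .
      moreover have "(-t) * (- p b) \<le> (-t) * p (-b)"
        using mult_left_mono[OF \<open>- p b \<le> p (-b)\<close>, of "-t"] False by simp
      ultimately show ?thesis by simp
    qed
    moreover have "\<And>t. t *\<^sub>R b \<in> X" using X b by (simp add: subspace_scale)
    ultimately show ?thesis unfolding A_def
    proof (intro CollectI conjI allI impI)
      show "G0 \<subseteq> X \<times> UNIV" unfolding G0_def using \<open>\<And>t. t *\<^sub>R b \<in> X\<close> by auto
      show "G0 \<subseteq> G0" by simp
      fix x a y c r
      assume xa: "(x, a) \<in> G0"
      then obtain t where t: "x = t *\<^sub>R b" "a = t * p b" unfolding G0_def by auto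
      show "(r *\<^sub>R x, r * a) \<in> G0" unfolding G0_def t by (auto intro!: exI[of _ "r * t"])
      show "a \<le> p x" using t \<open>\<And>t. t * p b \<le> p (t *\<^sub>R b)\<close> by simp
      assume "(y, c) \<in> G0"
      then obtain t' where t': "y = t' *\<^sub>R b" "c = t' * p b" unfolding G0_def by auto
      show "(x + y, a + c) \<in> G0" unfolding G0_def t t'
        by (rule CollectI, rule exI[of _ "t + t'"]) (simp add: scaleR_add_left distrib_right)
    qed
  qed
  have "\<forall>C\<in>chains A. \<exists>U\<in>A. \<forall>Z\<in>C. Z \<subseteq> U"
  proof
    fix C assume C: "C \<in> chains A"
    show "\<exists>U\<in>A. \<forall>Z\<in>C. Z \<subseteq> U"
    proof (cases "C = {}")
      case True then show ?thesis using G0A by auto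
    next
      case False
      have CA: "C \<subseteq> A" and ch: "\<And>Z W. Z \<in> C \<Longrightarrow> W \<in> C \<Longrightarrow> Z \<subseteq> W \<or> W \<subseteq> Z"
        using C unfolding chains_def chain_subset_def by auto
      have "\<Union>C \<in> A"
      proof -
        have 1: "\<Union>C \<subseteq> X \<times> UNIV" using CA unfolding A_def by blast
        have 2: "G0 \<subseteq> \<Union>C" using CA False unfolding A_def by blast
        have 3: "(x + y, a + c) \<in> \<Union>C" if xyin: "(x,a) \<in> \<Union>C" "(y,c) \<in> \<Union>C" for x a y c
        proof -
          obtain Z W where Z: "Z \<in> C" "(x,a) \<in> Z" and W: "W \<in> C" "(y,c) \<in> W" using xyin by auto
          show ?thesis
          proof (cases "Z \<subseteq> W")
            case True
            then have "(x,a) \<in> W" using Z by auto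
            then have "(x+y, a+c) \<in> W" using W CA unfolding A_def by blast
            then show ?thesis using W by auto
          next
            case False
            then have "W \<subseteq> Z" using ch[OF Z(1) W(1)] by auto
            then have "(y,c) \<in> Z" using W by auto
            then have "(x+y, a+c) \<in> Z" using Z CA unfolding A_def by blast
            then show ?thesis using Z by auto
          qed
        qed
        have 4: "(r *\<^sub>R x, r * a) \<in> \<Union>C" if "(x,a) \<in> \<Union>C" for x a r
          using that CA unfolding A_def by blast
        have 5: "a \<le> p x" if "(x,a) \<in> \<Union>C" for x a
          using that CA unfolding A_def by blast
        show ?thesis unfolding A_def using 1 2 3 4 5 by blast
      qed
      then show ?thesis by auto
    qed
  qed
  from Zorn_Lemma2[OF this] obtain M where MA: "M \<in> A" and Mmax: "\<And>Z. Z \<in> A \<Longrightarrow> M \<subseteq> Z \<Longrightarrow> Z = M"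
    by blast
  have MX: "M \<subseteq> X \<times> UNIV" and G0M: "G0 \<subseteq> M"
    and Madd: "\<And>x a y c. (x,a) \<in> M \<Longrightarrow> (y,c) \<in> M \<Longrightarrow> (x + y, a + c) \<in> M"
    and Msc: "\<And>x a r. (x,a) \<in> M \<Longrightarrow> (r *\<^sub>R x, r * a) \<in> M"
    and Mp: "\<And>x a. (x,a) \<in> M \<Longrightarrow> a \<le> p x"
    using MA unfolding A_def by blast+
  have "(0 *\<^sub>R b, 0 * p b) \<in> G0" unfolding G0_def by blast
  then have M00: "(0, 0) \<in> M" using G0M by auto
  have "(1 *\<^sub>R b, 1 * p b) \<in> G0" unfolding G0_def by blast
  then have Mb: "(b, p b) \<in> M" using G0M by auto
  have uniq: "a = a'" if "(x,a) \<in> M" "(x,a') \<in> M" for x a a'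
  proof -
    have "(0, a - a') \<in> M" using Madd[OF that(1) Msc[OF that(2), of "-1"]] by simp
    then have 1: "a - a' \<le> 0" using Mp[of 0] p0 by fastforce
    have "(0, a' - a) \<in> M" using Madd[OF that(2) Msc[OF that(1), of "-1"]] by simp
    then have 2: "a' - a \<le> 0" using Mp[of 0] p0 by fastforce
    from 1 2 show ?thesis by simp
  qed
  have total: "\<exists>a. (x0, a) \<in> M" if x0: "x0 \<in> X" for x0
  proof (rule ccontr)
    assume nx: "\<not> (\<exists>a. (x0, a) \<in> M)"
    define c where "c = Sup {a - p (h - x0) | h a. (h,a) \<in> M}"
    have key: "a - p (h - x0) \<le> p (h' + x0) - a'" if "(h,a) \<in> M" "(h',a') \<in> M" for h a h' a'
    proof -
      have hX: "h \<in> X" "h' \<in> X" using that MX by auto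
      have "a + a' \<le> p (h + h')" using Mp[OF Madd[OF that]] .
      also have "h + h' = (h - x0) + (h' + x0)" by simp
      also have "p \<dots> \<le> p (h - x0) + p (h' + x0)"
        using sub[of "h - x0" "h' + x0"] hX x0 X by (simp add: subspace_diff subspace_add)
      finally show ?thesis by simp
    qed
    have ne: "{a - p (h - x0) | h a. (h,a) \<in> M} \<noteq> {}" using M00 by blast
    have bdd: "bdd_above {a - p (h - x0) | h a. (h,a) \<in> M}"
      using key[OF _ M00] by (auto intro!: bdd_aboveI[of _ "p (0 + x0) - 0"])
    have c_lo: "a - p (h - x0) \<le> c" if "(h,a) \<in> M" for h a
      unfolding c_def using that bdd by (auto intro!: cSup_upper)
    have c_hi: "c \<le> p (h' + x0) - a'" if "(h',a') \<in> M" for h' a'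
      unfolding c_def using ne key[OF _ that] by (auto intro!: cSup_least)
    define G' where "G' = {(h + t *\<^sub>R x0, a + t * c) | h a t. (h,a) \<in> M}"
    have "G' \<in> A"
    proof -
      have 1: "G' \<subseteq> X \<times> UNIV" unfolding G'_def using MX x0 X
        by (auto simp: subspace_add subspace_scale)
      have MG': "M \<subseteq> G'"
      proof
        fix z assume "z \<in> M"
        then obtain h a where z: "z = (h, a)" "(h,a) \<in> M" by (cases z) auto
        have "z = (h + 0 *\<^sub>R x0, a + 0 * c)" using z by simp
        then show "z \<in> G'" unfolding G'_def using z(2) by blast
      qed
      have 2: "G0 \<subseteq> G'" using G0M MG' by auto
      have 3: "(x + y, a1 + a2) \<in> G'" if "(x,a1) \<in> G'" "(y,a2) \<in> G'" for x y a1 a2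
      proof -
        note that' = that
        obtain h a t where "(h,a) \<in> M" "x = h + t *\<^sub>R x0" "a1 = a + t * c" using that'(1) unfolding G'_def by auto
        moreover obtain h' a' t' where "(h',a') \<in> M" "y = h' + t' *\<^sub>R x0" "a2 = a' + t' * c" using that'(2) unfolding G'_def by auto
        ultimately have "(x + y, a1 + a2) = ((h + h') + (t + t') *\<^sub>R x0, (a + a') + (t + t') * c)"
          and "(h + h', a + a') \<in> M"
          by (simp add: algebra_simps, blast intro: Madd)
        then show ?thesis unfolding G'_def by blast
      qed
      have 4: "(r *\<^sub>R x, r * a1) \<in> G'" if "(x,a1) \<in> G'" for x a1 r
      proof -
        note that' = that
        obtain h a t where "(h,a) \<in> M" "x = h + t *\<^sub>R x0" "a1 = a + t * c" using that' unfolding G'_def by auto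
        then have "(r *\<^sub>R x, r * a1) = (r *\<^sub>R h + (r * t) *\<^sub>R x0, r * a + (r * t) * c)"
          and "(r *\<^sub>R h, r * a) \<in> M"
          by (simp add: algebra_simps, blast intro: Msc)
        then show ?thesis unfolding G'_def by blast
      qed
      have 5: "a1 \<le> p x" if "(x,a1) \<in> G'" for x a1
      proof -
        note that' = that
        obtain h a t where ha: "(h,a) \<in> M" and xe: "x = h + t *\<^sub>R x0" and ae: "a1 = a + t * c"
          using that' unfolding G'_def by auto
        have hX: "h \<in> X" using ha MX by auto
        consider "t = 0" | "t > 0" | "t < 0" by linarith
        then show ?thesis
        proof cases
          case 1 then show ?thesis using Mp[OF ha] xe ae by simp
        next
          case 2
          have "(inverse t *\<^sub>R h, inverse t * a) \<in> M" using Msc[OF ha] .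
          then have "c \<le> p (inverse t *\<^sub>R h + x0) - inverse t * a" by (rule c_hi)
          then have "t * c \<le> t * p (inverse t *\<^sub>R h + x0) - a" using 2
            by (rule aux_mul1[rotated])
          also have "t * p (inverse t *\<^sub>R h + x0) = p (t *\<^sub>R (inverse t *\<^sub>R h + x0))"
            using hom[of "inverse t *\<^sub>R h + x0" t] 2 hX x0 X by (simp add: subspace_add subspace_scale)
          also have "t *\<^sub>R (inverse t *\<^sub>R h + x0) = h + t *\<^sub>R x0" using 2 by (simp add: scaleR_add_right)
          finally show ?thesis using xe ae by simp
        next
          case 3
          define s where "s = - t"
          have s: "s > 0" using 3 s_def by simp
          have "(inverse s *\<^sub>R h, inverse s * a) \<in> M" using Msc[OF ha] .
          then have "inverse s * a - p (inverse s *\<^sub>R h - x0) \<le> c" by (rule c_lo)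
          then have "a - s * p (inverse s *\<^sub>R h - x0) \<le> s * c" using s
            by (rule aux_mul2[rotated])
          also have "s * p (inverse s *\<^sub>R h - x0) = p (s *\<^sub>R (inverse s *\<^sub>R h - x0))"
            using hom[of "inverse s *\<^sub>R h - x0" s] s hX x0 X by (simp add: subspace_diff subspace_scale)
          also have "s *\<^sub>R (inverse s *\<^sub>R h - x0) = h + t *\<^sub>R x0" using s s_def by (simp add: scaleR_diff_right)
          finally show ?thesis using xe ae s_def by simp
        qed
      qed
      show ?thesis unfolding A_def using 1 2 3 4 5 by blast
    qed
    moreover have "M \<subseteq> G'"
    proof
      fix z assume "z \<in> M"
      then obtain h a where z: "z = (h, a)" "(h,a) \<in> M" by (cases z) auto
      have "z = (h + 0 *\<^sub>R x0, a + 0 * c)" using z by simp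
      then show "z \<in> G'" unfolding G'_def using z(2) by blast
    qed
    ultimately have "G' = M" using Mmax by blast
    moreover have "(x0, c) \<in> G'"
    proof -
      have "(x0, c) = (0 + 1 *\<^sub>R x0, 0 + 1 * c)" by simp
      then show ?thesis unfolding G'_def using M00 by blast
    qed
    ultimately show False using nx by auto
  qed
  define F where "F x = (SOME a. (x,a) \<in> M)" for x
  have FM: "(x, F x) \<in> M" if "x \<in> X" for x
    unfolding F_def using total[OF that] by (rule someI_ex)
  have Fadd: "\<forall>x\<in>X. \<forall>y\<in>X. F (x + y) = F x + F y"
    using FM Madd uniq X by (meson subspace_add)
  have Fsc: "\<forall>x\<in>X. \<forall>c. F (c *\<^sub>R x) = c * F x"
    using FM Msc uniq X by (meson subspace_scale)
  have Fp: "\<forall>x\<in>X. F x \<le> p x" using FM Mp by blast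
  have Fb: "F b = p b" using uniq[OF FM[OF b] Mb] .
  show ?thesis using Fadd Fsc Fp Fb by blast
qed

lemma norm_on_D:
  assumes "is_norm_on N X"
  shows "subspace X" "\<forall>x\<in>X. 0 \<le> N x" "\<forall>x\<in>X. N x = 0 \<longleftrightarrow> x = 0"
     "\<forall>x\<in>X. \<forall>c. N (c *\<^sub>R x) = \<bar>c\<bar> * N x" "\<forall>x\<in>X. \<forall>y\<in>X. N (x + y) \<le> N x + N y"
  using assms unfolding is_norm_on_def by simp_all

lemma norm_on_props:
  assumes "is_norm_on N X"
  shows "subspace X" "\<And>x. x \<in> X \<Longrightarrow> 0 \<le> N x" "N 0 = 0"
    "\<And>x c. x \<in> X \<Longrightarrow> N (c *\<^sub>R x) = \<bar>c\<bar> * N x"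
    "\<And>x y. x \<in> X \<Longrightarrow> y \<in> X \<Longrightarrow> N (x + y) \<le> N x + N y"
    "\<And>x. x \<in> X \<Longrightarrow> N (- x) = N x"
    "\<And>x. x \<in> X \<Longrightarrow> x \<noteq> 0 \<Longrightarrow> 0 < N x"
proof -
  have D: "subspace X" "\<forall>x\<in>X. 0 \<le> N x" "\<forall>x\<in>X. N x = 0 \<longleftrightarrow> x = 0"
     "\<forall>x\<in>X. \<forall>c. N (c *\<^sub>R x) = \<bar>c\<bar> * N x" "\<forall>x\<in>X. \<forall>y\<in>X. N (x + y) \<le> N x + N y"
    using norm_on_D[OF assms] by blast+
  show X: "subspace X" using D(1) .
  show "\<And>x. x \<in> X \<Longrightarrow> 0 \<le> N x" using D(2) by simp
  show "N 0 = 0" using D(3) subspace_0[OF X] by simp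
  show hom: "\<And>x c. x \<in> X \<Longrightarrow> N (c *\<^sub>R x) = \<bar>c\<bar> * N x" using D(4) by simp
  show "\<And>x y. x \<in> X \<Longrightarrow> y \<in> X \<Longrightarrow> N (x + y) \<le> N x + N y" using D(5) by simp
  show "\<And>x. x \<in> X \<Longrightarrow> N (- x) = N x" using hom[of _ "-1"] by simp
  show "\<And>x. x \<in> X \<Longrightarrow> x \<noteq> 0 \<Longrightarrow> 0 < N x"
  proof -
    fix x assume "x \<in> X" "x \<noteq> 0"
    then have "N x \<noteq> 0" "0 \<le> N x" using D(2,3) by auto
    then show "0 < N x" by simp
  qed
qed

lemma norm_on_subspace:
  assumes "is_norm_on N X" "subspace X'" "X' \<subseteq> X"
  shows "is_norm_on N X'"
proof -
  have D: "\<forall>x\<in>X. 0 \<le> N x" "\<forall>x\<in>X. N x = 0 \<longleftrightarrow> x = 0"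
     "\<forall>x\<in>X. \<forall>c. N (c *\<^sub>R x) = \<bar>c\<bar> * N x" "\<forall>x\<in>X. \<forall>y\<in>X. N (x + y) \<le> N x + N y"
    using norm_on_D[OF assms(1)] by blast+
  show ?thesis unfolding is_norm_on_def
  proof (intro conjI ballI allI)
    show "subspace X'" by fact
  next
    fix x assume "x \<in> X'"
    then have x: "x \<in> X" using assms(3) by auto
    show "0 \<le> N x" using D(1) x by simp
    show "N x = 0 \<longleftrightarrow> x = 0" using D(2) x by simp
    fix c show "N (c *\<^sub>R x) = \<bar>c\<bar> * N x" using D(3) x by simp
  next
    fix x y assume "x \<in> X'" "y \<in> X'"
    then show "N (x + y) \<le> N x + N y" using D(4) assms(3) by auto
  qed
qed

lemma proj_exists:
  fixes N :: "'a::real_vector \<Rightarrow> real"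
  shows "is_norm_on N X \<Longrightarrow> finite B \<Longrightarrow> card B \<le> d \<Longrightarrow> B \<subseteq> X \<Longrightarrow>
    \<exists>P. (\<forall>x\<in>X. \<forall>y\<in>X. P (x + y) = P x + P y) \<and> (\<forall>x\<in>X. \<forall>c. P (c *\<^sub>R x) = c *\<^sub>R P x) \<and>
        P ` X \<subseteq> span B \<and> (\<forall>y\<in>span B. P y = y) \<and> (\<forall>x\<in>X. N (P x) \<le> (2 ^ d - 1) * N x)"
proof (induction d arbitrary: X B)
  case 0
  then have B: "B = {}" by simp
  have "N 0 = 0" using norm_on_props(3)[OF 0(1)] .
  then show ?case using B by (intro exI[of _ "\<lambda>x. 0"]) auto
next
  case (Suc d)
  note nX = Suc.prems(1)
  have X: "subspace X" using norm_on_props(1)[OF nX] .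
  have N0: "N 0 = 0" using norm_on_props(3)[OF nX] .
  have Nnn: "\<And>x. x \<in> X \<Longrightarrow> 0 \<le> N x" using norm_on_props(2)[OF nX] .
  have mono: "(2::real) ^ d - 1 \<le> 2 ^ Suc d - 1" by simp
  show ?case
  proof (cases "B = {}")
    case True
    have "1 \<le> (2::real) ^ Suc d" by (rule one_le_power) simp
    then have "\<And>x. x \<in> X \<Longrightarrow> 0 \<le> (2 ^ Suc d - 1) * N x" using Nnn by simp
    then show ?thesis using True N0 by (intro exI[of _ "\<lambda>x. 0"]) auto
  next
    case False
    then obtain b where bB: "b \<in> B" by auto
    have bX: "b \<in> X" using bB Suc.prems(4) by auto
    have cardB': "card (B - {b}) \<le> d" using Suc.prems(2,3) bB by (simp add: card_Diff_singleton)
    have finBb: "finite (B - {b})" using Suc.prems(2) by simp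
    have subBb: "B - {b} \<subseteq> X" using Suc.prems(4) by auto
    show ?thesis
    proof (cases "b = 0")
      case True
      have "span B = span (insert 0 (B - {b}))" using True bB by (simp add: insert_absorb)
      also have "\<dots> = span (B - {b})" by (rule span_insert_0)
      finally have "span (B - {b}) = span B" by simp
      moreover obtain P where P: "(\<forall>x\<in>X. \<forall>y\<in>X. P (x + y) = P x + P y)" "(\<forall>x\<in>X. \<forall>c. P (c *\<^sub>R x) = c *\<^sub>R P x)"
        "P ` X \<subseteq> span (B - {b})" "(\<forall>y\<in>span (B - {b}). P y = y)" "(\<forall>x\<in>X. N (P x) \<le> (2 ^ d - 1) * N x)"
        using Suc.IH[OF nX finBb cardB' subBb] by blast
      moreover have "\<forall>x\<in>X. N (P x) \<le> (2 ^ Suc d - 1) * N x"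
      proof
        fix x assume x: "x \<in> X"
        have "N (P x) \<le> (2 ^ d - 1) * N x" using P(5) x by blast
        also have "\<dots> \<le> (2 ^ Suc d - 1) * N x" by (rule mult_right_mono[OF mono Nnn[OF x]])
        finally show "N (P x) \<le> (2 ^ Suc d - 1) * N x" .
      qed
      ultimately show ?thesis by (intro exI[of _ P]) auto
    next
      case False
      have Nb: "0 < N b" using norm_on_props(7)[OF nX bX False] .
      have subN: "\<And>x y. x \<in> X \<Longrightarrow> y \<in> X \<Longrightarrow> N (x + y) \<le> N x + N y"
        using norm_on_props(5)[OF nX] .
      have homN: "\<And>x c. x \<in> X \<Longrightarrow> c \<ge> 0 \<Longrightarrow> N (c *\<^sub>R x) = c * N x"
        using norm_on_props(4)[OF nX] by simp
      obtain F where Fadd: "\<forall>x\<in>X. \<forall>y\<in>X. F (x + y) = F x + F y"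
        and Fsc: "\<forall>x\<in>X. \<forall>c. F (c *\<^sub>R x) = c * F x" and Fle: "\<forall>x\<in>X. F x \<le> N x" and Fb: "F b = N b"
        using hb_graph[OF X subN homN bX] by blast
      have Fabs: "\<bar>F x\<bar> \<le> N x" if "x \<in> X" for x
      proof -
        have "F ((-1) *\<^sub>R x) = (-1) * F x" using Fsc that by blast
        then have "F (- x) = - F x" by simp
        moreover have "- x \<in> X" using subspace_neg[OF X that] .
        then have "F (- x) \<le> N (- x)" using Fle by blast
        moreover have "N (- x) = N x" using norm_on_props(6)[OF nX that] .
        ultimately show ?thesis using Fle that by auto
      qed
      define f where "f x = F x / N b" for x
      have fadd: "\<forall>x\<in>X. \<forall>y\<in>X. f (x + y) = f x + f y" using Fadd unfolding f_def by (simp add: add_divide_distrib)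
      have fsc: "\<forall>x\<in>X. \<forall>c. f (c *\<^sub>R x) = c * f x" using Fsc unfolding f_def by simp
      have fb: "f b = 1" using Fb Nb unfolding f_def by simp
      have fbound: "\<bar>f x\<bar> * N b \<le> N x" if "x \<in> X" for x
        using Fabs[OF that] Nb unfolding f_def by (simp add: abs_div)
      define X' where "X' = {x \<in> X. F x = 0}"
      have "F (0 *\<^sub>R 0) = 0 * F 0" using Fsc subspace_0[OF X] by blast
      then have F0: "F 0 = 0" by simp
      have X'sub: "subspace X'" unfolding X'_def subspace_def
        using X Fadd Fsc F0 by (simp add: subspace_0 subspace_add subspace_scale)
      have nX': "is_norm_on N X'" using norm_on_subspace[OF nX X'sub] X'_def by auto
      define g where "g v = v - f v *\<^sub>R b" for v
      have gX': "g v \<in> X'" if "v \<in> X" for v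
      proof -
        have "g v \<in> X" unfolding g_def using that bX X by (simp add: subspace_diff subspace_scale)
        moreover have "F (g v) = 0"
        proof -
          have "F (g v) = F (v + (- f v) *\<^sub>R b)" unfolding g_def by simp
          also have "\<dots> = F v + F ((- f v) *\<^sub>R b)"
            using Fadd that subspace_scale[OF X bX] by blast
          also have "F ((- f v) *\<^sub>R b) = (- f v) * F b" using Fsc bX by blast
          also have "F v + (- f v) * F b = F v - f v * F b" by simp
          also have "\<dots> = 0" using Fb Nb unfolding f_def by simp
          finally show ?thesis .
        qed
        ultimately show ?thesis unfolding X'_def by auto
      qed
      define B' where "B' = g ` (B - {b})"
      have finB': "finite B'" using Suc.prems(2) unfolding B'_def by simp
      have cardB'': "card B' \<le> d" unfolding B'_def using cardB' card_image_le Suc.prems(2)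
        by (meson finite_Diff order_trans)
      have B'X': "B' \<subseteq> X'" unfolding B'_def using gX' Suc.prems(4) by auto
      obtain P' where P'add: "\<forall>x\<in>X'. \<forall>y\<in>X'. P' (x + y) = P' x + P' y"
        and P'sc: "\<forall>x\<in>X'. \<forall>c. P' (c *\<^sub>R x) = c *\<^sub>R P' x"
        and P'rng: "P' ` X' \<subseteq> span B'" and P'id: "\<forall>y\<in>span B'. P' y = y"
        and P'bd: "\<forall>x\<in>X'. N (P' x) \<le> (2 ^ d - 1) * N x"
        using Suc.IH[OF nX' finB' cardB'' B'X'] by blast
      have spB'X': "span B' \<subseteq> X'" using B'X' X'sub by (simp add: span_minimal)
      have X'X: "X' \<subseteq> X" unfolding X'_def by auto
      have B'spB: "span B' \<subseteq> span B"
      proof (rule span_minimal[OF _ subspace_span])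
        show "B' \<subseteq> span B"
        proof
          fix z assume "z \<in> B'"
          then obtain v where v: "v \<in> B" "z = v - f v *\<^sub>R b" unfolding B'_def g_def by auto
          show "z \<in> span B" unfolding v(2)
            by (rule span_diff[OF span_base[OF v(1)] span_scale[OF span_base[OF bB]]])
        qed
      qed
      define P where "P x = f x *\<^sub>R b + P' (g x)" for x
      have gadd: "g (x + y) = g x + g y" if "x \<in> X" "y \<in> X" for x y
        unfolding g_def using fadd that by (simp add: algebra_simps scaleR_add_left)
      have gsc: "g (c *\<^sub>R x) = c *\<^sub>R g x" if "x \<in> X" for x c
        unfolding g_def using fsc that by (simp add: algebra_simps)
      have Padd: "\<forall>x\<in>X. \<forall>y\<in>X. P (x + y) = P x + P y"
        unfolding P_def using gadd fadd P'add gX' by (simp add: scaleR_add_left)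
      have Psc: "\<forall>x\<in>X. \<forall>c. P (c *\<^sub>R x) = c *\<^sub>R P x"
        unfolding P_def using gsc fsc P'sc gX' by (simp add: scaleR_add_right)
      have Prng: "P ` X \<subseteq> span B"
      proof
        fix z assume "z \<in> P ` X"
        then obtain x where x: "x \<in> X" "z = P x" by auto
        have "P' (g x) \<in> span B" using P'rng gX'[OF x(1)] B'spB by auto
        moreover have "f x *\<^sub>R b \<in> span B" using bB by (simp add: span_base span_scale)
        ultimately show "z \<in> span B" unfolding x P_def by (simp add: span_add)
      qed
      have spBX: "span B \<subseteq> X" using Suc.prems(4) X by (simp add: span_minimal)
      have gspan: "g y \<in> span B'" if "y \<in> span B" for y
      proof -
        have "y \<in> {y. y \<in> X \<and> g y \<in> span B'}"
        proof (rule span_subspace_induct[OF that])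
          show "subspace {y. y \<in> X \<and> g y \<in> span B'}"
            unfolding subspace_def
          proof (intro conjI ballI allI)
            show "0 \<in> {y. y \<in> X \<and> g y \<in> span B'}"
              using X gX'[of 0] X'_def fsc[rule_format, of 0 0] unfolding g_def
              by (simp add: subspace_0 span_zero)
            fix x y assume "x \<in> {y. y \<in> X \<and> g y \<in> span B'}" "y \<in> {y. y \<in> X \<and> g y \<in> span B'}"
            then show "x + y \<in> {y. y \<in> X \<and> g y \<in> span B'}"
              using gadd X by (simp add: subspace_add span_add)
          next
            fix c x assume "x \<in> {y. y \<in> X \<and> g y \<in> span B'}"
            then show "c *\<^sub>R x \<in> {y. y \<in> X \<and> g y \<in> span B'}"
              using gsc X by (simp add: subspace_scale span_scale)
          qed
        next
          fix v assume v: "v \<in> B"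
          show "v \<in> {y. y \<in> X \<and> g y \<in> span B'}"
          proof (cases "v = b")
            case True
            then show ?thesis using bX fb unfolding g_def by (simp add: span_zero)
          next
            case False
            then have "g v \<in> B'" unfolding B'_def using v by auto
            then show ?thesis using v Suc.prems(4) by (auto intro: span_base)
          qed
        qed
        then show ?thesis by simp
      qed
      have Pid: "\<forall>y\<in>span B. P y = y"
      proof
        fix y assume y: "y \<in> span B"
        have "P' (g y) = g y" using P'id gspan[OF y] by auto
        then show "P y = y" unfolding P_def g_def by simp
      qed
      have Pbd: "\<forall>x\<in>X. N (P x) \<le> (2 ^ Suc d - 1) * N x"
      proof
        fix x assume x: "x \<in> X"
        have fbX: "f x *\<^sub>R b \<in> X" using bX X by (simp add: subspace_scale)
        have P'gX: "P' (g x) \<in> X" using P'rng gX'[OF x] spB'X' X'X by auto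
        have "N (P x) \<le> N (f x *\<^sub>R b) + N (P' (g x))"
          unfolding P_def using norm_on_props(5)[OF nX fbX P'gX] .
        also have "N (f x *\<^sub>R b) = \<bar>f x\<bar> * N b" using norm_on_props(4)[OF nX bX] .
        also have "N (P' (g x)) \<le> (2 ^ d - 1) * N (g x)" using P'bd gX'[OF x] by auto
        also have "N (g x) \<le> N x + \<bar>f x\<bar> * N b"
        proof -
          have "N (g x) = N (x + (- f x) *\<^sub>R b)" unfolding g_def by simp
          also have "\<dots> \<le> N x + N ((- f x) *\<^sub>R b)"
            using norm_on_props(5)[OF nX x subspace_scale[OF X bX, of "- f x"]] .
          also have "N ((- f x) *\<^sub>R b) = \<bar>f x\<bar> * N b" using norm_on_props(4)[OF nX bX, of "- f x"] by (simp only: abs_minus_cancel)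
          finally show ?thesis .
        qed
        finally have "N (P x) \<le> \<bar>f x\<bar> * N b + (2 ^ d - 1) * (N x + \<bar>f x\<bar> * N b)"
          by (simp add: mult_left_mono)
        also have "\<dots> \<le> N x + (2 ^ d - 1) * (N x + N x)"
          using fbound[OF x] by (intro add_mono mult_left_mono) auto
        also have "\<dots> = (2 ^ Suc d - 1) * N x" by (simp add: algebra_simps)
        finally show "N (P x) \<le> (2 ^ Suc d - 1) * N x" .
      qed
      show ?thesis using Padd Psc Prng Pid Pbd by blast
    qed
  qed
qed

lemma bproj_D:
  assumes "is_bounded_proj N X Y P"
  shows "\<forall>x\<in>X. \<forall>y\<in>X. P (x + y) = P x + P y" "\<forall>x\<in>X. \<forall>c. P (c *\<^sub>R x) = c *\<^sub>R P x"
    "P ` X \<subseteq> Y" "\<forall>y\<in>Y. P y = y" "\<exists>K. \<forall>x\<in>X. N (P x) \<le> K * N x"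
  using assms unfolding is_bounded_proj_def by simp_all

lemma op_norm_bdd:
  assumes nX: "is_norm_on N X" and bp: "is_bounded_proj N X Y P"
  shows "bdd_above {N (P x) | x. x \<in> X \<and> N x \<le> 1}"
proof -
  obtain K where K: "\<forall>x\<in>X. N (P x) \<le> K * N x" using bproj_D(5)[OF bp] by blast
  have "N (P x) \<le> \<bar>K\<bar>" if "x \<in> X" "N x \<le> 1" for x
  proof -
    have "N (P x) \<le> K * N x" using K that by blast
    also have "\<dots> \<le> \<bar>K\<bar> * N x" using norm_on_props(2)[OF nX that(1)] by (simp add: mult_right_mono)
    also have "\<dots> \<le> \<bar>K\<bar> * 1" using that(2) by (intro mult_left_mono) auto
    finally show ?thesis by simp
  qed
  then show ?thesis by (auto intro!: bdd_aboveI[of _ "\<bar>K\<bar>"])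
qed

lemma op_norm_upper:
  assumes nX: "is_norm_on N X" and bp: "is_bounded_proj N X Y P" and x: "x \<in> X" "N x \<le> 1"
  shows "N (P x) \<le> op_norm_on N X P"
  unfolding op_norm_on_def using x op_norm_bdd[OF nX bp] by (intro cSup_upper) auto

lemma op_norm_nonneg:
  assumes nX: "is_norm_on N X" and bp: "is_bounded_proj N X Y P"
  shows "0 \<le> op_norm_on N X P"
proof -
  have X0: "0 \<in> X" using subspace_0[OF norm_on_props(1)[OF nX]] .
  have "P (0 *\<^sub>R 0) = 0 *\<^sub>R P 0" using bproj_D(2)[OF bp] X0 by blast
  then have "P 0 = 0" by simp
  then have "N (P 0) = 0" using norm_on_props(3)[OF nX] by simp
  moreover have "N (P 0) \<le> op_norm_on N X P" using op_norm_upper[OF nX bp X0] norm_on_props(3)[OF nX] by simp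
  ultimately show ?thesis by simp
qed

lemma op_norm_le:
  assumes nX: "is_norm_on N X" and C: "0 \<le> C" and bd: "\<forall>x\<in>X. N (P x) \<le> C * N x"
  shows "op_norm_on N X P \<le> C"
  unfolding op_norm_on_def
proof (rule cSup_least)
  have X0: "0 \<in> X" using subspace_0[OF norm_on_props(1)[OF nX]] .
  then show "{N (P x) |x. x \<in> X \<and> N x \<le> 1} \<noteq> {}" using norm_on_props(3)[OF nX] by auto
next
  fix v assume "v \<in> {N (P x) |x. x \<in> X \<and> N x \<le> 1}"
  then obtain x where x: "x \<in> X" "N x \<le> 1" "v = N (P x)" by auto
  have "N (P x) \<le> C * N x" using bd x by blast
  also have "\<dots> \<le> C * 1" using x(2) C by (intro mult_left_mono) auto
  finally show "v \<le> C" using x by simp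
qed

lemma rel_bound:
  fixes N :: "'a::real_vector \<Rightarrow> real"
  assumes nX: "is_norm_on N X" and Y: "subspace Y" "Y \<subseteq> X" and dY: "dim Y = m" "0 < m"
  shows "{op_norm_on N X P | P. is_bounded_proj N X Y P} \<noteq> {}"
    and "rel_proj_const N X Y \<le> 2 ^ m - 1"
proof -
  obtain B where B: "B \<subseteq> Y" "independent B" "Y \<subseteq> span B" "card B = dim Y"
    by (rule basis_exists)
  have finB: "finite B" using B(4) dY by (intro card_ge_0_finite) simp
  have cB: "card B \<le> m" using B(4) dY by simp
  have BX: "B \<subseteq> X" using B(1) Y(2) by auto
  have spanB: "span B = Y" using B(1,3) Y(1) span_minimal[of B Y] by auto
  obtain P where Padd: "\<forall>x\<in>X. \<forall>y\<in>X. P (x + y) = P x + P y" and Psc: "\<forall>x\<in>X. \<forall>c. P (c *\<^sub>R x) = c *\<^sub>R P x"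
    and Prng: "P ` X \<subseteq> span B" and Pid: "\<forall>y\<in>span B. P y = y" and Pbd: "\<forall>x\<in>X. N (P x) \<le> (2 ^ m - 1) * N x"
    using proj_exists[OF nX finB cB BX] by blast
  have bp: "is_bounded_proj N X Y P" unfolding is_bounded_proj_def
    using Padd Psc Prng Pid Pbd spanB by blast
  then show "{op_norm_on N X P | P. is_bounded_proj N X Y P} \<noteq> {}" by blast
  have C0: "(0::real) \<le> 2 ^ m - 1" by simp
  have "rel_proj_const N X Y \<le> op_norm_on N X P"
    unfolding rel_proj_const_def
  proof (rule cInf_lower)
    show "op_norm_on N X P \<in> {op_norm_on N X P |P. is_bounded_proj N X Y P}" using bp by blast
    show "bdd_below {op_norm_on N X P |P. is_bounded_proj N X Y P}"
      using op_norm_nonneg[OF nX] by (auto intro!: bdd_belowI[of _ 0])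
  qed
  also have "\<dots> \<le> 2 ^ m - 1" using op_norm_le[OF nX C0 Pbd] .
  finally show "rel_proj_const N X Y \<le> 2 ^ m - 1" .
qed

lemma rel_transfer_set:
  fixes \<phi> :: "'a::real_vector \<Rightarrow> 'b::real_vector" and \<psi> :: "'b \<Rightarrow> 'a"
  assumes lphi: "linear \<phi>" and lpsi: "linear \<psi>" and inv: "\<And>x. \<psi> (\<phi> x) = x"
  shows "{op_norm_on N X P | P. is_bounded_proj N X Y P} =
         {op_norm_on (\<lambda>g. N (\<psi> g)) (\<phi> ` X) Q | Q. is_bounded_proj (\<lambda>g. N (\<psi> g)) (\<phi> ` X) (\<phi> ` Y) Q}"
proof (intro equalityI subsetI)
  fix v assume "v \<in> {op_norm_on N X P | P. is_bounded_proj N X Y P}"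
  then obtain P where v: "v = op_norm_on N X P" and bp: "is_bounded_proj N X Y P" by blast
  define Q where "Q = (\<lambda>g. \<phi> (P (\<psi> g)))"
  have Qphi: "Q (\<phi> x) = \<phi> (P x)" for x unfolding Q_def inv ..
  have D: "\<forall>x\<in>X. \<forall>y\<in>X. P (x + y) = P x + P y" "\<forall>x\<in>X. \<forall>c. P (c *\<^sub>R x) = c *\<^sub>R P x"
    "P ` X \<subseteq> Y" "\<forall>y\<in>Y. P y = y" "\<exists>K. \<forall>x\<in>X. N (P x) \<le> K * N x" using bproj_D[OF bp] by blast+
  have "is_bounded_proj (\<lambda>g. N (\<psi> g)) (\<phi> ` X) (\<phi> ` Y) Q"
    unfolding is_bounded_proj_def
  proof (intro conjI ballI allI)
    fix x' y' assume "x' \<in> \<phi> ` X" "y' \<in> \<phi> ` X"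
    then obtain x y where "x \<in> X" "y \<in> X" "x' = \<phi> x" "y' = \<phi> y" by auto
    then show "Q (x' + y') = Q x' + Q y'"
      using D(1) Qphi linear_add[OF lphi, symmetric] by (metis linear_add[OF lphi])
  next
    fix x' c assume "x' \<in> \<phi> ` X"
    then obtain x where "x \<in> X" "x' = \<phi> x" by auto
    then show "Q (c *\<^sub>R x') = c *\<^sub>R Q x'"
      using D(2) Qphi by (metis linear_scale[OF lphi])
  next
    show "Q ` \<phi> ` X \<subseteq> \<phi> ` Y" using D(3) Qphi by auto
  next
    fix y' assume "y' \<in> \<phi> ` Y"
    then obtain y where "y \<in> Y" "y' = \<phi> y" by auto
    then show "Q y' = y'" using D(4) Qphi by simp
  next
    obtain K where K: "\<forall>x\<in>X. N (P x) \<le> K * N x" using D(5) by blast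
    show "\<exists>K. \<forall>x\<in>\<phi> ` X. N (\<psi> (Q x)) \<le> K * N (\<psi> x)"
      using K by (auto simp: Qphi inv intro!: exI[of _ K])
  qed
  moreover have "op_norm_on (\<lambda>g. N (\<psi> g)) (\<phi> ` X) Q = op_norm_on N X P"
  proof -
    have "{N (\<psi> (Q x)) |x. x \<in> \<phi> ` X \<and> N (\<psi> x) \<le> 1} = {N (P x) |x. x \<in> X \<and> N x \<le> 1}"
    proof (intro equalityI subsetI)
      fix v assume "v \<in> {N (\<psi> (Q x)) |x. x \<in> \<phi> ` X \<and> N (\<psi> x) \<le> 1}"
      then show "v \<in> {N (P x) |x. x \<in> X \<and> N x \<le> 1}" by (auto simp: Qphi inv)
    next
      fix v assume "v \<in> {N (P x) |x. x \<in> X \<and> N x \<le> 1}"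
      then obtain x where x: "x \<in> X" "N x \<le> 1" "v = N (P x)" by blast
      then have "v = N (\<psi> (Q (\<phi> x))) \<and> \<phi> x \<in> \<phi> ` X \<and> N (\<psi> (\<phi> x)) \<le> 1" by (simp add: Qphi inv)
      then show "v \<in> {N (\<psi> (Q x)) |x. x \<in> \<phi> ` X \<and> N (\<psi> x) \<le> 1}" by blast
    qed
    then show ?thesis unfolding op_norm_on_def by simp
  qed
  ultimately show "v \<in> {op_norm_on (\<lambda>g. N (\<psi> g)) (\<phi> ` X) Q | Q. is_bounded_proj (\<lambda>g. N (\<psi> g)) (\<phi> ` X) (\<phi> ` Y) Q}"
    using v by (metis (mono_tags, lifting) mem_Collect_eq)
next
  fix v assume "v \<in> {op_norm_on (\<lambda>g. N (\<psi> g)) (\<phi> ` X) Q | Q. is_bounded_proj (\<lambda>g. N (\<psi> g)) (\<phi> ` X) (\<phi> ` Y) Q}"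
  then obtain Q where v: "v = op_norm_on (\<lambda>g. N (\<psi> g)) (\<phi> ` X) Q"
    and bq: "is_bounded_proj (\<lambda>g. N (\<psi> g)) (\<phi> ` X) (\<phi> ` Y) Q" by blast
  have D: "\<forall>x\<in>\<phi> ` X. \<forall>y\<in>\<phi> ` X. Q (x + y) = Q x + Q y" "\<forall>x\<in>\<phi> ` X. \<forall>c. Q (c *\<^sub>R x) = c *\<^sub>R Q x"
    "Q ` \<phi> ` X \<subseteq> \<phi> ` Y" "\<forall>y\<in>\<phi> ` Y. Q y = y" "\<exists>K. \<forall>x\<in>\<phi> ` X. N (\<psi> (Q x)) \<le> K * N (\<psi> x)"
    using bproj_D[OF bq] by blast+
  define P where "P = (\<lambda>x. \<psi> (Q (\<phi> x)))"
  have "is_bounded_proj N X Y P"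
    unfolding is_bounded_proj_def
  proof (intro conjI ballI allI)
    fix x y assume "x \<in> X" "y \<in> X"
    then show "P (x + y) = P x + P y"
      unfolding P_def using D(1) by (simp add: linear_add[OF lphi] linear_add[OF lpsi])
  next
    fix x c assume "x \<in> X"
    then show "P (c *\<^sub>R x) = c *\<^sub>R P x"
      unfolding P_def using D(2) by (simp add: linear_scale[OF lphi] linear_scale[OF lpsi])
  next
    show "P ` X \<subseteq> Y"
    proof
      fix z assume "z \<in> P ` X"
      then obtain x where x: "x \<in> X" "z = P x" by auto
      then have "Q (\<phi> x) \<in> \<phi> ` Y" using D(3) by auto
      then obtain y where "y \<in> Y" "Q (\<phi> x) = \<phi> y" by auto
      then show "z \<in> Y" using x unfolding P_def by (simp add: inv)
    qed
  next
    fix y assume "y \<in> Y"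
    then show "P y = y" unfolding P_def using D(4) by (simp add: inv)
  next
    obtain K where K: "\<forall>x\<in>\<phi> ` X. N (\<psi> (Q x)) \<le> K * N (\<psi> x)" using D(5) by blast
    show "\<exists>K. \<forall>x\<in>X. N (P x) \<le> K * N x"
      using K unfolding P_def by (auto simp: inv intro!: exI[of _ K])
  qed
  moreover have "op_norm_on N X P = op_norm_on (\<lambda>g. N (\<psi> g)) (\<phi> ` X) Q"
  proof -
    have "{N (\<psi> (Q x)) |x. x \<in> \<phi> ` X \<and> N (\<psi> x) \<le> 1} = {N (P x) |x. x \<in> X \<and> N x \<le> 1}"
      unfolding P_def by (auto simp: inv)
    then show ?thesis unfolding op_norm_on_def by simp
  qed
  ultimately show "v \<in> {op_norm_on N X P | P. is_bounded_proj N X Y P}" using v by (metis (mono_tags, lifting) mem_Collect_eq)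
qed

lemma banach_transfer:
  fixes \<phi> :: "'a::real_vector \<Rightarrow> 'b::real_vector" and \<psi> :: "'b \<Rightarrow> 'a"
  assumes lphi: "linear \<phi>" and lpsi: "linear \<psi>" and inv: "\<And>x. \<psi> (\<phi> x) = x"
    and bX: "is_banach_on N X"
  shows "is_banach_on (\<lambda>g. N (\<psi> g)) (\<phi> ` X)"
proof -
  have nX: "is_norm_on N X" using bX unfolding is_banach_on_def by simp
  have comp: "\<forall>s::nat \<Rightarrow> 'a. (\<forall>n. s n \<in> X) \<longrightarrow>
        (\<forall>e>0. \<exists>M. \<forall>m\<ge>M. \<forall>n\<ge>M. N (s m - s n) < e) \<longrightarrow>
        (\<exists>l\<in>X. \<forall>e>0. \<exists>M. \<forall>n\<ge>M. N (s n - l) < e)" using bX unfolding is_banach_on_def by simp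
  have D: "subspace X" "\<forall>x\<in>X. 0 \<le> N x" "\<forall>x\<in>X. N x = 0 \<longleftrightarrow> x = 0"
     "\<forall>x\<in>X. \<forall>c. N (c *\<^sub>R x) = \<bar>c\<bar> * N x" "\<forall>x\<in>X. \<forall>y\<in>X. N (x + y) \<le> N x + N y"
    using norm_on_D[OF nX] by blast+
  have phi0: "\<phi> x = 0 \<longleftrightarrow> x = 0" for x
    using inv[of x] linear_0[OF lpsi] linear_0[OF lphi] by metis
  have n': "is_norm_on (\<lambda>g. N (\<psi> g)) (\<phi> ` X)"
    unfolding is_norm_on_def
  proof (intro conjI ballI allI)
    show "subspace (\<phi> ` X)" using linear_subspace_image[OF lphi D(1)] .
  next
    fix x' assume "x' \<in> \<phi> ` X"
    then obtain x where x: "x \<in> X" "x' = \<phi> x" by auto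
    show "0 \<le> N (\<psi> x')" using D(2) x by (simp add: inv)
    show "N (\<psi> x') = 0 \<longleftrightarrow> x' = 0" using D(3) x by (simp add: inv phi0)
    fix c show "N (\<psi> (c *\<^sub>R x')) = \<bar>c\<bar> * N (\<psi> x')" using D(4) x
      by (simp add: inv linear_scale[OF lpsi])
  next
    fix x' y' assume "x' \<in> \<phi> ` X" "y' \<in> \<phi> ` X"
    then obtain x y where "x \<in> X" "y \<in> X" "x' = \<phi> x" "y' = \<phi> y" by auto
    then show "N (\<psi> (x' + y')) \<le> N (\<psi> x') + N (\<psi> y')" using D(5)
      by (simp add: inv linear_add[OF lpsi])
  qed
  show ?thesis unfolding is_banach_on_def
  proof (intro conjI allI impI n')
    fix s :: "nat \<Rightarrow> 'b"
    assume sX: "\<forall>n. s n \<in> \<phi> ` X" and cs: "\<forall>e>0. \<exists>M. \<forall>m\<ge>M. \<forall>n\<ge>M. N (\<psi> (s m - s n)) < e"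
    define t where "t n = \<psi> (s n)" for n
    have st: "s n = \<phi> (t n)" for n using sX unfolding t_def by (metis imageE inv)
    have tX: "\<forall>n. t n \<in> X"
    proof
      fix n obtain x where "x \<in> X" "s n = \<phi> x" using sX by blast
      then show "t n \<in> X" unfolding t_def by (simp add: inv)
    qed
    have ct: "\<forall>e>0. \<exists>M. \<forall>m\<ge>M. \<forall>n\<ge>M. N (t m - t n) < e"
      using cs unfolding t_def by (simp add: linear_diff[OF lpsi])
    obtain l where l: "l \<in> X" "\<forall>e>0. \<exists>M. \<forall>n\<ge>M. N (t n - l) < e" using comp tX ct by blast
    have "\<forall>e>0. \<exists>M. \<forall>n\<ge>M. N (\<psi> (s n - \<phi> l)) < e"
      using l(2) by (simp add: st linear_diff[OF lpsi] inv)
    then show "\<exists>l\<in>\<phi> ` X. \<forall>e>0. \<exists>M. \<forall>n\<ge>M. N (\<psi> (s n - l)) < e" using l(1) by blast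
  qed
qed

lemma scaleR_fun_apply [simp]: "(c *\<^sub>R f) x = c *\<^sub>R f x"
  by (simp add: scaleR_fun_def)

lemma linf_set_eq: "{\<bar>x i\<bar> | i. i < n} = (\<lambda>i. \<bar>x i\<bar>) ` {..<n}" by auto

lemma linf_le_iff: "linf_norm n x \<le> c \<longleftrightarrow> 0 \<le> c \<and> (\<forall>i<n. \<bar>x i\<bar> \<le> c)"
  unfolding linf_norm_def linf_set_eq by (subst Max_le_iff) auto

lemma linf_ge: "i < n \<Longrightarrow> \<bar>x i\<bar> \<le> linf_norm n x"
  unfolding linf_norm_def linf_set_eq by (rule Max_ge) auto

lemma linf_nonneg: "0 \<le> linf_norm n x"
  unfolding linf_norm_def by (rule Max_ge) (auto simp: linf_set_eq)

lemma linf_attained: "linf_norm n x = 0 \<or> (\<exists>i<n. linf_norm n x = \<bar>x i\<bar>)"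
proof -
  have "linf_norm n x \<in> insert 0 ((\<lambda>i. \<bar>x i\<bar>) ` {..<n})"
    unfolding linf_norm_def linf_set_eq by (rule Max_in) auto
  then show ?thesis by auto
qed

lemma linf_less: "0 < c \<Longrightarrow> (\<forall>i<n. \<bar>x i\<bar> < c) \<Longrightarrow> linf_norm n x < c"
  using linf_attained[of n x] by auto

lemma linf_space_sub: "subspace (linf_space n)"
  unfolding subspace_def linf_space_def by auto

lemma linf_norm_on: "is_norm_on (linf_norm n) (linf_space n)"
  unfolding is_norm_on_def
proof (intro conjI ballI allI linf_space_sub linf_nonneg)
  fix x assume x: "x \<in> linf_space n"
  show "linf_norm n x = 0 \<longleftrightarrow> x = 0"
  proof
    assume "linf_norm n x = 0"
    then have "\<forall>i<n. \<bar>x i\<bar> \<le> 0" using linf_le_iff[of n x 0] by simp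
    then show "x = 0" using x unfolding linf_space_def by (auto simp: fun_eq_iff) (metis abs_le_zero_iff not_le)
  next
    assume "x = 0" then show "linf_norm n x = 0"
      using linf_le_iff[of n x 0] linf_nonneg[of n x] by simp
  qed
  fix c
  show "linf_norm n (c *\<^sub>R x) = \<bar>c\<bar> * linf_norm n x"
  proof (rule antisym)
    show "linf_norm n (c *\<^sub>R x) \<le> \<bar>c\<bar> * linf_norm n x"
      unfolding linf_le_iff using linf_ge[of _ n x] linf_nonneg[of n x]
      by (auto simp: abs_mult intro: mult_left_mono)
    show "\<bar>c\<bar> * linf_norm n x \<le> linf_norm n (c *\<^sub>R x)"
      using linf_attained[of n x]
    proof
      assume "linf_norm n x = 0" then show ?thesis using linf_nonneg[of n "c *\<^sub>R x"] by simp
    next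
      assume "\<exists>i<n. linf_norm n x = \<bar>x i\<bar>"
      then obtain i where i: "i < n" "linf_norm n x = \<bar>x i\<bar>" by blast
      have "\<bar>(c *\<^sub>R x) i\<bar> \<le> linf_norm n (c *\<^sub>R x)" by (rule linf_ge[OF i(1)])
      then show ?thesis using i by (simp add: abs_mult)
    qed
  qed
next
  fix x y assume "x \<in> linf_space n" "y \<in> linf_space n"
  show "linf_norm n (x + y) \<le> linf_norm n x + linf_norm n y"
    unfolding linf_le_iff
  proof (intro conjI allI impI)
    show "0 \<le> linf_norm n x + linf_norm n y" using linf_nonneg[of n x] linf_nonneg[of n y] by simp
    fix i assume "i < n"
    then have "\<bar>x i\<bar> \<le> linf_norm n x" "\<bar>y i\<bar> \<le> linf_norm n y" by (auto intro: linf_ge)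
    then show "\<bar>(x + y) i\<bar> \<le> linf_norm n x + linf_norm n y" by simp
  qed
qed

lemma linf_banach: "is_banach_on (linf_norm n) (linf_space n)"
  unfolding is_banach_on_def
proof (intro conjI allI impI linf_norm_on)
  fix s :: "nat \<Rightarrow> nat \<Rightarrow> real"
  assume sX: "\<forall>k. s k \<in> linf_space n"
    and cs: "\<forall>e>0. \<exists>M. \<forall>m\<ge>M. \<forall>k\<ge>M. linf_norm n (s m - s k) < e"
  have cauchy: "Cauchy (\<lambda>k. s k i)" if "i < n" for i
  proof (rule CauchyI)
    fix e :: real assume "0 < e"
    then obtain M where M: "\<forall>m\<ge>M. \<forall>k\<ge>M. linf_norm n (s m - s k) < e" using cs by blast
    have "\<forall>m\<ge>M. \<forall>k\<ge>M. norm (s m i - s k i) < e"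
    proof (intro allI impI)
      fix m k assume "m \<ge> M" "k \<ge> M"
      then have "linf_norm n (s m - s k) < e" using M by blast
      moreover have "\<bar>(s m - s k) i\<bar> \<le> linf_norm n (s m - s k)" by (rule linf_ge[OF that])
      ultimately show "norm (s m i - s k i) < e" by simp
    qed
    then show "\<exists>M. \<forall>m\<ge>M. \<forall>k\<ge>M. norm (s m i - s k i) < e" by blast
  qed
  define l where "l i = (if i < n then lim (\<lambda>k. s k i) else 0)" for i
  have lconv: "(\<lambda>k. s k i) \<longlonglongrightarrow> l i" if "i < n" for i
    using cauchy[OF that] that unfolding l_def by (simp add: Cauchy_convergent_iff convergent_LIMSEQ_iff)
  have lX: "l \<in> linf_space n" unfolding linf_space_def l_def by auto
  have "\<forall>e>0. \<exists>M. \<forall>k\<ge>M. linf_norm n (s k - l) < e"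
  proof (intro allI impI)
    fix e :: real assume e: "0 < e"
    have "\<forall>i\<in>{..<n}. eventually (\<lambda>k. \<bar>s k i - l i\<bar> < e) sequentially"
    proof
      fix i assume "i \<in> {..<n}"
      then have "(\<lambda>k. s k i) \<longlonglongrightarrow> l i" using lconv by simp
      then show "eventually (\<lambda>k. \<bar>s k i - l i\<bar> < e) sequentially"
        using e unfolding tendsto_iff dist_real_def by blast
    qed
    then have "eventually (\<lambda>k. \<forall>i\<in>{..<n}. \<bar>s k i - l i\<bar> < e) sequentially"
      by (rule eventually_ball_finite[rotated]) simp
    then obtain M where M: "\<forall>k\<ge>M. \<forall>i\<in>{..<n}. \<bar>s k i - l i\<bar> < e"
      unfolding eventually_sequentially by blast
    have "\<forall>k\<ge>M. linf_norm n (s k - l) < e"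
      using M e by (auto intro!: linf_less)
    then show "\<exists>M. \<forall>k\<ge>M. linf_norm n (s k - l) < e" by blast
  qed
  then show "\<exists>l\<in>linf_space n. \<forall>e>0. \<exists>M. \<forall>k\<ge>M. linf_norm n (s k - l) < e" using lX by blast
qed

definition embL :: "(nat \<Rightarrow> real) \<Rightarrow> (real \<Rightarrow> real)" where
  "embL x = (\<lambda>r. x (nat \<lfloor>r\<rfloor>))"

definition embR :: "(real \<Rightarrow> real) \<Rightarrow> (nat \<Rightarrow> real)" where
  "embR g = (\<lambda>i. g (real i))"

lemma embL_linear: "linear embL"
  by (rule linearI) (auto simp: embL_def fun_eq_iff)

lemma embR_linear: "linear embR"
  by (rule linearI) (auto simp: embR_def fun_eq_iff)

lemma embR_embL: "embR (embL x) = x"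
  by (simp add: embR_def embL_def)

lemma mn_subset_abs:
  "{rel_proj_const (linf_norm n) (linf_space n) Y | Y.
       subspace Y \<and> Y \<subseteq> linf_space n \<and> dim Y = m}
   \<subseteq> {rel_proj_const N X Y | N X (Y :: (real \<Rightarrow> real) set).
       is_banach_on N X \<and> subspace Y \<and> Y \<subseteq> X \<and> dim Y = m}"
proof
  fix v assume "v \<in> {rel_proj_const (linf_norm n) (linf_space n) Y | Y.
       subspace Y \<and> Y \<subseteq> linf_space n \<and> dim Y = m}"
  then obtain Y where Y: "subspace Y" "Y \<subseteq> linf_space n" "dim Y = m"
    and v: "v = rel_proj_const (linf_norm n) (linf_space n) Y" by blast
  define N' where "N' = (\<lambda>g. linf_norm n (embR g))"
  define X' where "X' = embL ` linf_space n"
  define Y' where "Y' = embL ` Y"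
  have "v = rel_proj_const N' X' Y'"
    unfolding v rel_proj_const_def N'_def X'_def Y'_def
    using rel_transfer_set[where \<phi>=embL and \<psi>=embR and N="linf_norm n" and X="linf_space n" and Y=Y, OF embL_linear embR_linear embR_embL]
    by simp
  moreover have "is_banach_on N' X'" unfolding N'_def X'_def
    by (rule banach_transfer[where \<phi>=embL and \<psi>=embR, OF embL_linear embR_linear embR_embL linf_banach])
  moreover have "subspace Y'" unfolding Y'_def by (rule linear_subspace_image[where f=embL, OF embL_linear Y(1)])
  moreover have "Y' \<subseteq> X'" unfolding Y'_def X'_def using Y(2) by auto
  moreover have "dim Y' = m"
  proof -
    have inj: "inj_on embL A" for A by (metis embR_embL inj_on_inverseI)
    obtain B where B: "B \<subseteq> Y" "independent B" "Y \<subseteq> span B" "card B = dim Y"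
      by (rule basis_exists)
    have spB: "span B = span Y"
      using B(1,3) span_mono[of B Y] span_mono[of Y "span B"] span_span[of B] by auto
    have indep: "independent (embL ` B)"
      by (rule linear_independent_injective_image[where f=embL, OF embL_linear B(2) inj])
    have cardB: "card (embL ` B) = card B" by (rule card_image[OF inj])
    have "span (embL ` B) = span (embL ` Y)"
      using span_linear_image[where f=embL, OF embL_linear] spB by metis
    then have "dim (embL ` Y) = card (embL ` B)" using dim_eq_card[OF _ indep] by metis
    then show ?thesis unfolding Y'_def using cardB B(4) Y(3) by simp
  qed
  ultimately show "v \<in> {rel_proj_const N X Y | N X (Y :: (real \<Rightarrow> real) set).
       is_banach_on N X \<and> subspace Y \<and> Y \<subseteq> X \<and> dim Y = m}" by blast
qed

definition sL :: "int list list" where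
  "sL = [[1, -1, -1, -1, -1, -1, 1, 1, 1, 1, 1, 1, 1, 1, 1, 1], [-1, 1, -1, -1, -1, -1, 1, 1, 1, 1, -1, -1, -1, -1, -1, -1], [-1, -1, 1, -1, -1, -1, 1, -1, -1, -1, 1, 1, 1, -1, -1, -1], [-1, -1, -1, 1, -1, -1, -1, 1, -1, -1, 1, -1, -1, 1, 1, -1], [-1, -1, -1, -1, 1, -1, -1, -1, 1, -1, -1, 1, -1, 1, -1, 1], [-1, -1, -1, -1, -1, 1, -1, -1, -1, 1, -1, -1, 1, -1, 1, 1], [1, 1, 1, -1, -1, -1, 1, 1, 1, 1, 1, 1, 1, -1, -1, -1], [1, 1, -1, 1, -1, -1, 1, 1, 1, 1, 1, -1, -1, 1, 1, -1], [1, 1, -1, -1, 1, -1, 1, 1, 1, 1, -1, 1, -1, 1, -1, 1], [1, 1, -1, -1, -1, 1, 1, 1, 1, 1, -1, -1, 1, -1, 1, 1], [1, -1, 1, 1, -1, -1, 1, 1, -1, -1, 1, 1, 1, 1, 1, -1], [1, -1, 1, -1, 1, -1, 1, -1, 1, -1, 1, 1, 1, 1, -1, 1], [1, -1, 1, -1, -1, 1, 1, -1, -1, 1, 1, 1, 1, -1, 1, 1], [1, -1, -1, 1, 1, -1, -1, 1, 1, -1, 1, 1, -1, 1, 1, 1], [1, -1, -1, 1, -1, 1, -1, 1, -1, 1, 1, -1, 1, 1, 1, 1], [1, -1, -1, -1, 1, 1, -1, -1, 1, 1, -1, 1, 1, 1, 1, 1]]"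

definition aL :: "int list list" where
  "aL = [[0, 0, 0, 0, 0, 0, 5, 5, 5, 5, 0, 0, 0, 0, 0, 0], [0, 0, 0, 0, 0, 0, 5, 0, 0, 0, 5, 5, 5, 0, 0, 0], [0, 0, 0, 0, 0, 0, 5, 5, 5, 0, 5, 5, 0, 5, 0, 0], [0, 0, 0, 0, 0, 0, -5, 0, -5, 0, 0, -5, 0, 0, 5, 0], [0, 0, 0, 0, 0, 0, -5, -5, 0, 0, -5, 0, 0, 0, 0, 5]]"

definition bL :: "int list list" where
  "bL = [[2, 2, -1, -1, -1, -1, 0, 0, 0, 0, 0, 0, 0, 0, 0, 0], [2, -1, 2, -1, -1, -1, 0, 0, 0, 0, 0, 0, 0, 0, 0, 0], [3, 0, 0, 0, 0, -3, 0, 0, 0, 0, 0, 0, 0, 0, 0, 0], [-1, -1, -1, 2, -1, 2, 0, 0, 0, 0, 0, 0, 0, 0, 0, 0], [-1, -1, -1, -1, 2, 2, 0, 0, 0, 0, 0, 0, 0, 0, 0, 0]]"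

definition KL :: "nat list" where "KL = [9, 12, 13, 14, 15]"

definition w1I :: "nat \<Rightarrow> int" where "w1I i = (if i < 6 then 0 else 1)"

definition E0 :: "nat \<Rightarrow> nat \<Rightarrow> int" where
  "E0 k j = sum_list (map (\<lambda>i. sL ! j ! i * (5 * aL ! k ! i + 5 * w1I i * bL ! k ! i)) [0..<16])"

definition E1 :: "nat \<Rightarrow> nat \<Rightarrow> int" where
  "E1 k j = sum_list (map (\<lambda>i. sL ! j ! i * (5 * bL ! k ! i + w1I i * aL ! k ! i)) [0..<16])"

lemma eig_check:
  "list_all (\<lambda>k. list_all (\<lambda>j. E0 k j = 20 * aL ! k ! j + 50 * bL ! k ! j \<and>
      E1 k j = 20 * bL ! k ! j + 10 * aL ! k ! j) [0..<16]) [0..<5]"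
  by code_simp

lemma sym_check:
  "list_all (\<lambda>i. list_all (\<lambda>j. sL ! i ! j = sL ! j ! i \<and> (sL ! i ! j = 1 \<or> sL ! i ! j = -1)) [0..<16]) [0..<16]"
  by code_simp

lemma K_check:
  "list_all (\<lambda>k. list_all (\<lambda>k'. aL ! k ! (KL ! k') = (if k = k' then 5 else 0) \<and> bL ! k ! (KL ! k') = 0 \<and> KL ! k' < 16) [0..<5]) [0..<5]"
  by code_simp

lemma fun_sum_apply: "(\<Sum>j\<in>F. f j) x = (\<Sum>j\<in>F. f j x)" for f :: "'i \<Rightarrow> 'a \<Rightarrow> 'b::comm_monoid_add"
  by (induction F rule: infinite_finite_induct) auto

definition sR :: "nat \<Rightarrow> nat \<Rightarrow> real" where "sR i j = of_int (sL ! i ! j)"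
definition wR :: "nat \<Rightarrow> real" where "wR i = 5 + sqrt 5 * of_int (w1I i)"
definition muR :: real where "muR = 20 + 10 * sqrt 5"
definition yv :: "nat \<Rightarrow> nat \<Rightarrow> real" where
  "yv k = (\<lambda>i. if i < 16 then of_int (aL ! k ! i) + sqrt 5 * of_int (bL ! k ! i) else 0)"
definition Y0 :: "(nat \<Rightarrow> real) set" where "Y0 = span (yv ` {..<5})"

lemma upt_list_all: "list_all P [0..<n] \<longleftrightarrow> (\<forall>i<n. P i)"
  by (auto simp: list_all_iff)

lemma eig_int: "k < 5 \<Longrightarrow> j < 16 \<Longrightarrow> E0 k j = 20 * aL ! k ! j + 50 * bL ! k ! j \<and>
      E1 k j = 20 * bL ! k ! j + 10 * aL ! k ! j"
  using eig_check unfolding upt_list_all by blast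

lemma sym_int: "i < 16 \<Longrightarrow> j < 16 \<Longrightarrow> sL ! i ! j = sL ! j ! i \<and> (sL ! i ! j = 1 \<or> sL ! i ! j = -1)"
  using sym_check unfolding upt_list_all by blast

lemma K_int: "k < 5 \<Longrightarrow> k' < 5 \<Longrightarrow> aL ! k ! (KL ! k') = (if k = k' then 5 else 0) \<and> bL ! k ! (KL ! k') = 0 \<and> KL ! k' < 16"
  using K_check unfolding upt_list_all by blast

lemma sum_list_upt16: "sum_list (map f [0..<16]) = (\<Sum>i<16. f i)"
  by (simp add: sum_set_upt_conv_sum_list_nat[symmetric] atLeast0LessThan)

lemma sqrt5_sq: "sqrt 5 * sqrt 5 = (5::real)" by simp

lemma term_id:
  fixes r s w a b :: real
  assumes "r * r = 5"
  shows "s * (5 + r * w) * (a + r * b) = s * (5 * a + 5 * w * b) + r * (s * (5 * b + w * a))"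
proof -
  have "s * (5 + r * w) * (a + r * b) = s*(5*a) + s*(5*(r*b)) + s*(r*w*a) + s*((r*r)*w*b)"
    by (simp add: algebra_simps)
  also have "\<dots> = s * (5 * a + 5 * w * b) + r * (s * (5 * b + w * a))"
    unfolding assms by (simp add: algebra_simps)
  finally show ?thesis .
qed

lemma term_id2:
  fixes r a b :: real
  assumes "r * r = 5"
  shows "(20 + 10 * r) * (a + r * b) = (20 * a + 50 * b) + r * (20 * b + 10 * a)"
proof -
  have "(20 + 10 * r) * (a + r * b) = 20 * a + 20 * (r * b) + 10 * (r * a) + 10 * ((r * r) * b)"
    by (simp add: algebra_simps)
  also have "\<dots> = (20 * a + 50 * b) + r * (20 * b + 10 * a)"
    unfolding assms by (simp add: algebra_simps)
  finally show ?thesis .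
qed

lemma eig_basis:
  assumes k: "k < 5" and j: "j < 16"
  shows "(\<Sum>i<16. sR j i * wR i * yv k i) = muR * yv k j"
proof -
  have "(\<Sum>i<16. sR j i * wR i * yv k i) =
        (\<Sum>i<16. of_int (sL ! j ! i * (5 * aL ! k ! i + 5 * w1I i * bL ! k ! i))
           + sqrt 5 * of_int (sL ! j ! i * (5 * bL ! k ! i + w1I i * aL ! k ! i)))"
  proof (rule sum.cong[OF refl])
    fix i assume "i \<in> {..<16::nat}"
    then have i: "i < 16" by simp
    show "sR j i * wR i * yv k i = of_int (sL ! j ! i * (5 * aL ! k ! i + 5 * w1I i * bL ! k ! i))
           + sqrt 5 * of_int (sL ! j ! i * (5 * bL ! k ! i + w1I i * aL ! k ! i))"
      unfolding sR_def wR_def yv_def using i term_id[OF sqrt5_sq] by simp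
  qed
  also have "\<dots> = of_int (E0 k j) + sqrt 5 * of_int (E1 k j)"
    unfolding E0_def E1_def sum_list_upt16 by (simp add: sum.distrib sum_distrib_left)
  also have "\<dots> = muR * yv k j"
    using eig_int[OF k j] j unfolding muR_def yv_def
    by (simp add: term_id2[OF sqrt5_sq])
  finally show ?thesis .
qed

lemma yv_linf: "yv k \<in> linf_space 16"
  unfolding yv_def linf_space_def by auto

lemma Y0_sub: "subspace Y0" unfolding Y0_def by simp

lemma Y0_linf: "Y0 \<subseteq> linf_space 16"
  unfolding Y0_def by (rule span_minimal) (use yv_linf linf_space_sub in auto)

lemma yv_K: "k < 5 \<Longrightarrow> k' < 5 \<Longrightarrow> yv k (KL ! k') = (if k = k' then 5 else 0)"
  using K_int[of k k'] unfolding yv_def by auto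

lemma yv_inj: "inj_on yv {..<5}"
proof
  fix k k' assume "k \<in> {..<5::nat}" "k' \<in> {..<5::nat}" "yv k = yv k'"
  then show "k = k'" using yv_K[of k k] yv_K[of k' k] by (metis lessThan_iff zero_neq_numeral)
qed

lemma eig_Y0:
  assumes "v \<in> Y0" "j < 16"
  shows "(\<Sum>i<16. sR j i * wR i * v i) = muR * v j"
proof -
  have "v \<in> {v. \<forall>j<16. (\<Sum>i<16. sR j i * wR i * v i) = muR * v j}"
    using assms(1) unfolding Y0_def
  proof (rule span_subspace_induct)
    show "subspace {v. \<forall>j<16. (\<Sum>i<16. sR j i * wR i * v i) = muR * v j}"
      unfolding subspace_def
      by (auto simp: algebra_simps sum.distrib sum_distrib_left[symmetric] simp del: sum_distrib_left)
  next
    fix x assume "x \<in> yv ` {..<5}"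
    then obtain k where "k < 5" "x = yv k" by auto
    then show "x \<in> {v. \<forall>j<16. (\<Sum>i<16. sR j i * wR i * v i) = muR * v j}"
      using eig_basis by auto
  qed
  then show ?thesis using assms(2) by auto
qed

lemma recon_Y0:
  assumes "v \<in> Y0"
  shows "v = (\<Sum>k<5. (v (KL ! k) / 5) *\<^sub>R yv k)"
proof -
  have "v \<in> {v. v = (\<Sum>k<5. (v (KL ! k) / 5) *\<^sub>R yv k)}"
    using assms unfolding Y0_def
  proof (rule span_subspace_induct)
    show "subspace {v. v = (\<Sum>k<5. (v (KL ! k) / 5) *\<^sub>R yv k)}"
      unfolding subspace_def
    proof (intro conjI ballI allI)
      show "0 \<in> {v. v = (\<Sum>k<5. (v (KL ! k) / 5) *\<^sub>R yv k)}" by simp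
    next
      fix x y assume x: "x \<in> {v. v = (\<Sum>k<5. (v (KL ! k) / 5) *\<^sub>R yv k)}"
        and y: "y \<in> {v. v = (\<Sum>k<5. (v (KL ! k) / 5) *\<^sub>R yv k)}"
      have "(\<Sum>k<5. ((x + y) (KL ! k) / 5) *\<^sub>R yv k) =
            (\<Sum>k<5. (x (KL ! k) / 5) *\<^sub>R yv k) + (\<Sum>k<5. (y (KL ! k) / 5) *\<^sub>R yv k)"
        by (simp add: add_divide_distrib scaleR_add_left sum.distrib)
      then show "x + y \<in> {v. v = (\<Sum>k<5. (v (KL ! k) / 5) *\<^sub>R yv k)}" using x y by simp
    next
      fix c x assume x: "x \<in> {v. v = (\<Sum>k<5. (v (KL ! k) / 5) *\<^sub>R yv k)}"
      have "(\<Sum>k<5. ((c *\<^sub>R x) (KL ! k) / 5) *\<^sub>R yv k) = c *\<^sub>R (\<Sum>k<5. (x (KL ! k) / 5) *\<^sub>R yv k)"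
        by (simp add: scaleR_sum_right)
      then show "c *\<^sub>R x \<in> {v. v = (\<Sum>k<5. (v (KL ! k) / 5) *\<^sub>R yv k)}" using x by simp
    qed
  next
    fix x assume "x \<in> yv ` {..<5}"
    then obtain k0 where k0: "k0 < 5" "x = yv k0" by auto
    have "(\<Sum>k<5. (yv k0 (KL ! k) / 5) *\<^sub>R yv k) = (\<Sum>k<5. (if k0 = k then yv k else 0))"
      by (rule sum.cong[OF refl]) (simp add: yv_K k0(1))
    also have "\<dots> = yv k0" using k0(1) by (simp add: sum.delta)
    finally show "x \<in> {v. v = (\<Sum>k<5. (v (KL ! k) / 5) *\<^sub>R yv k)}" using k0 by simp
  qed
  then show ?thesis by simp
qed

lemma Y0_dim: "dim Y0 = 5"
proof -
  have fin: "finite (yv ` {..<5})" by simp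
  have indep: "independent (yv ` {..<5})"
  proof
    assume "dependent (yv ` {..<5})"
    then obtain u where u: "\<exists>v\<in>yv ` {..<5}. u v \<noteq> 0" "(\<Sum>v\<in>yv ` {..<5}. u v *\<^sub>R v) = 0"
      using dependent_finite[OF fin] by blast
    have "(\<Sum>k<5. u (yv k) *\<^sub>R yv k) = 0" using u(2) by (simp add: sum.reindex[OF yv_inj])
    then have ev: "(\<Sum>k<5. u (yv k) *\<^sub>R yv k) (KL ! k') = 0" for k' by simp
    have "u (yv k') = 0" if "k' < 5" for k'
    proof -
      have "(\<Sum>k<5. u (yv k) *\<^sub>R yv k) (KL ! k') = (\<Sum>k<5. u (yv k) * yv k (KL ! k'))"
        by (simp add: fun_sum_apply)
      also have "\<dots> = (\<Sum>k<5. if k = k' then 5 * u (yv k) else 0)"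
        by (rule sum.cong[OF refl]) (simp add: yv_K that)
      also have "\<dots> = 5 * u (yv k')" using that by (simp add: sum.delta')
      finally show ?thesis using ev[of k'] by simp
    qed
    then show False using u(1) by auto
  qed
  have "card (yv ` {..<5}) = 5" using card_image[OF yv_inj] by simp
  then show ?thesis unfolding Y0_def using dim_span_eq_card_independent[OF indep] by simp
qed

lemma w1_sum_int: "sum_list (map w1I [0..<16]) = 10" by code_simp

lemma wR_sum: "(\<Sum>i<16. wR i) = 80 + 10 * sqrt 5"
proof -
  have "(\<Sum>i<16::nat. of_int (w1I i) :: real) = of_int (\<Sum>i<16. w1I i)" by simp
  also have "(\<Sum>i<16. w1I i) = 10" using w1_sum_int unfolding sum_list_upt16 .
  finally have "(\<Sum>i<16::nat. of_int (w1I i) :: real) = 10" by simp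
  then show ?thesis unfolding wR_def by (simp add: sum.distrib sum_distrib_left[symmetric])
qed

lemma wR_nonneg: "0 \<le> wR i" unfolding wR_def w1I_def by simp

lemma P_sum:
  assumes nX: "is_norm_on N X" and bp: "is_bounded_proj N X Y P"
  shows "finite F \<Longrightarrow> (\<forall>j\<in>F. f j \<in> X) \<Longrightarrow> P (\<Sum>j\<in>F. c j *\<^sub>R f j) = (\<Sum>j\<in>F. c j *\<^sub>R P (f j))"
proof (induction F rule: finite_induct)
  case empty
  have X0: "0 \<in> X" using subspace_0[OF norm_on_props(1)[OF nX]] .
  have "P (0 *\<^sub>R 0) = 0 *\<^sub>R P 0" using bproj_D(2)[OF bp] X0 by blast
  then show ?case by simp
next
  case (insert a F)
  have X: "subspace X" using norm_on_props(1)[OF nX] .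
  have fa: "f a \<in> X" using insert.prems by simp
  have sX: "(\<Sum>j\<in>F. c j *\<^sub>R f j) \<in> X"
    using insert.prems by (intro subspace_sum[OF X]) (simp add: subspace_scale[OF X])
  have caX: "c a *\<^sub>R f a \<in> X" using subspace_scale[OF X fa] .
  have "P (\<Sum>j\<in>insert a F. c j *\<^sub>R f j) = P (c a *\<^sub>R f a + (\<Sum>j\<in>F. c j *\<^sub>R f j))"
    using insert.hyps by simp
  also have "\<dots> = P (c a *\<^sub>R f a) + P (\<Sum>j\<in>F. c j *\<^sub>R f j)"
    using bproj_D(1)[OF bp] caX sX by blast
  also have "P (c a *\<^sub>R f a) = c a *\<^sub>R P (f a)" using bproj_D(2)[OF bp] fa by blast
  also have "P (\<Sum>j\<in>F. c j *\<^sub>R f j) = (\<Sum>j\<in>F. c j *\<^sub>R P (f j))"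
    using insert.IH insert.prems by simp
  finally show ?case using insert.hyps by simp
qed

definition ej :: "nat \<Rightarrow> nat \<Rightarrow> real" where "ej j = (\<lambda>i. if i = j then 1 else 0)"

lemma ej_linf: "j < 16 \<Longrightarrow> ej j \<in> linf_space 16"
  unfolding ej_def linf_space_def by auto

lemma expand16: "v \<in> linf_space 16 \<Longrightarrow> v = (\<Sum>j<16. v j *\<^sub>R ej j)"
  unfolding fun_eq_iff fun_sum_apply
proof
  fix i assume v: "v \<in> linf_space 16"
  have "(\<Sum>j<16. (v j *\<^sub>R ej j) i) = (\<Sum>j<16. if i = j then v i else 0)"
    by (rule sum.cong[OF refl]) (auto simp: ej_def)
  also have "\<dots> = v i" using v unfolding linf_space_def by (simp add: sum.delta)
  finally show "v i = (\<Sum>j<16. (v j *\<^sub>R ej j) i)" by simp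
qed

lemma final_arith:
  fixes r :: real
  assumes "r * r = 5"
  shows "5 * (20 + 10 * r) = (80 + 10 * r) * (5 / 59 * (11 + 6 * r))"
proof -
  have "(80 + 10 * r) * (5 / 59 * (11 + 6 * r)) = 5 / 59 * (880 + 590 * r + 60 * (r * r))"
    by (simp add: algebra_simps)
  also have "\<dots> = 5 * (20 + 10 * r)" unfolding assms by simp
  finally show ?thesis by simp
qed

lemma op_lower:
  assumes bp: "is_bounded_proj (linf_norm 16) (linf_space 16) Y0 P"
  shows "5 / 59 * (11 + 6 * sqrt 5) \<le> op_norm_on (linf_norm 16) (linf_space 16) P"
proof -
  note nX = linf_norm_on[of 16]
  define op where "op = op_norm_on (linf_norm 16) (linf_space 16) P"
  have Pid: "\<forall>y\<in>Y0. P y = y" using bproj_D(4)[OF bp] .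
  have Prng: "P ` linf_space 16 \<subseteq> Y0" using bproj_D(3)[OF bp] .
  have Pv: "P v = (\<Sum>j<16. v j *\<^sub>R P (ej j))" if "v \<in> linf_space 16" for v
  proof -
    have "P v = P (\<Sum>j<16. v j *\<^sub>R ej j)" using expand16[OF that] by simp
    also have "\<dots> = (\<Sum>j<16. v j *\<^sub>R P (ej j))"
      by (rule P_sum[where N="linf_norm 16" and X="linf_space 16" and Y=Y0 and P=P, OF nX bp]) (auto intro: ej_linf)
    finally show ?thesis .
  qed
  have PeY: "P (ej j) \<in> Y0" if "j < 16" for j using Prng ej_linf[OF that] by auto
  define xs where "xs i = (\<lambda>j. if j < 16 then sR i j else 0)" for i
  have xsX: "xs i \<in> linf_space 16" for i unfolding xs_def linf_space_def by auto
  have xsN: "linf_norm 16 (xs i) \<le> 1" if "i < 16" for i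
  proof -
    have "\<bar>sR i j\<bar> \<le> 1" if "j < 16" for j
    proof -
      have "sL ! i ! j = 1 \<or> sL ! i ! j = -1" using sym_int[OF \<open>i < 16\<close> that] by blast
      then show ?thesis unfolding sR_def by auto
    qed
    then show ?thesis unfolding linf_le_iff xs_def by auto
  qed
  have lowi: "P (xs i) i \<le> op" if "i < 16" for i
  proof -
    have "P (xs i) i \<le> \<bar>P (xs i) i\<bar>" by simp
    also have "\<dots> \<le> linf_norm 16 (P (xs i))" by (rule linf_ge[OF that])
    also have "\<dots> \<le> op" unfolding op_def by (rule op_norm_upper[where N="linf_norm 16" and X="linf_space 16" and Y=Y0 and P=P and x="xs i", OF nX bp xsX xsN[OF that]])
    finally show ?thesis .
  qed
  have Pxs: "P (xs i) i = (\<Sum>j<16. sR i j * P (ej j) i)" for i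
    using Pv[OF xsX[of i]] by (simp add: fun_sum_apply xs_def)
  define T where "T = (\<Sum>j<16. P (ej j) j)"
  have A: "(\<Sum>i<16. wR i * P (xs i) i) = muR * T"
  proof -
    have "(\<Sum>i<16. wR i * P (xs i) i) = (\<Sum>i<16. \<Sum>j<16. wR i * (sR i j * P (ej j) i))"
      by (simp add: Pxs sum_distrib_left)
    also have "\<dots> = (\<Sum>j<16. \<Sum>i<16. sR j i * wR i * P (ej j) i)"
      by (subst sum.swap) (rule sum.cong[OF refl], rule sum.cong[OF refl],
          simp add: sR_def sym_int)
    also have "\<dots> = (\<Sum>j<16. muR * P (ej j) j)"
      by (rule sum.cong[OF refl]) (simp add: eig_Y0 PeY)
    finally show ?thesis unfolding T_def by (simp add: sum_distrib_left)
  qed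
  have B: "T = 5"
  proof -
    have "T = (\<Sum>j<16. \<Sum>k<5. (P (ej j) (KL ! k) / 5) * yv k j)"
      unfolding T_def
    proof (rule sum.cong[OF refl])
      fix j assume "j \<in> {..<16::nat}"
      then have "P (ej j) = (\<Sum>k<5. (P (ej j) (KL ! k) / 5) *\<^sub>R yv k)" using recon_Y0 PeY by auto
      then have "P (ej j) j = (\<Sum>k<5. (P (ej j) (KL ! k) / 5) *\<^sub>R yv k) j"
        by (rule arg_cong[where f="\<lambda>g. g j"])
      then show "P (ej j) j = (\<Sum>k<5. (P (ej j) (KL ! k) / 5) * yv k j)"
        by (simp only: fun_sum_apply scaleR_fun_apply real_scaleR_def)
    qed
    also have "\<dots> = (\<Sum>k<5. (1/5) * (\<Sum>j<16. yv k j * P (ej j) (KL ! k)))"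
      by (subst sum.swap) (simp add: sum_distrib_left algebra_simps)
    also have "\<dots> = (\<Sum>k<5. (1/5) * P (yv k) (KL ! k))"
    proof (rule sum.cong[OF refl])
      fix k assume "k \<in> {..<5::nat}"
      have "P (yv k) (KL ! k) = (\<Sum>j<16. yv k j * P (ej j) (KL ! k))"
        using Pv[OF yv_linf[of k]] by (simp add: fun_sum_apply)
      then show "(1/5) * (\<Sum>j<16. yv k j * P (ej j) (KL ! k)) = (1/5) * P (yv k) (KL ! k)" by simp
    qed
    also have "\<dots> = (\<Sum>k<5. (1/5) * yv k (KL ! k))"
      by (rule sum.cong[OF refl]) (simp add: Pid Y0_def span_base)
    also have "\<dots> = (\<Sum>k<5::nat. 1)" by (rule sum.cong[OF refl]) (simp add: yv_K)
    finally show ?thesis by simp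
  qed
  have "(\<Sum>i<16. wR i * P (xs i) i) \<le> (\<Sum>i<16. wR i * op)"
    by (rule sum_mono) (simp add: lowi wR_nonneg mult_left_mono)
  also have "\<dots> = (80 + 10 * sqrt 5) * op" by (simp add: sum_distrib_right[symmetric] wR_sum)
  finally have ineq: "5 * muR \<le> (80 + 10 * sqrt 5) * op" using A B by (simp add: mult.commute)
  have eq: "5 * muR = (80 + 10 * sqrt 5) * (5 / 59 * (11 + 6 * sqrt 5))"
    unfolding muR_def by (rule final_arith[OF sqrt5_sq])
  have pos: "0 < 80 + 10 * sqrt (5::real)" by (simp add: add_pos_nonneg)
  from ineq eq pos show ?thesis unfolding op_def
    by (metis mult_le_cancel_left_pos)
qed

theorem theorem5:
  shows "lambda_abs 5 \<ge> lambda_mn 5 16 \<and>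
         lambda_mn 5 16 \<ge> 5 / 59 * (11 + 6 * sqrt 5)"
proof -
  define S1 where "S1 = {rel_proj_const (linf_norm 16) (linf_space 16) Y | Y.
       subspace Y \<and> Y \<subseteq> linf_space 16 \<and> dim Y = 5}"
  define S2 where "S2 = {rel_proj_const N X Y | N X (Y :: (real \<Rightarrow> real) set).
       is_banach_on N X \<and> subspace Y \<and> Y \<subseteq> X \<and> dim Y = 5}"
  have sub: "S1 \<subseteq> S2" unfolding S1_def S2_def by (rule mn_subset_abs)
  have bdd2: "bdd_above S2"
  proof (rule bdd_aboveI)
    fix v assume "v \<in> S2"
    then obtain N X and Y :: "(real \<Rightarrow> real) set" where v: "v = rel_proj_const N X Y"
      and b: "is_banach_on N X" and Y: "subspace Y" "Y \<subseteq> X" "dim Y = 5"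
      unfolding S2_def by blast
    have nX: "is_norm_on N X" using b unfolding is_banach_on_def by simp
    have "rel_proj_const N X Y \<le> 2 ^ 5 - 1"
      by (rule rel_bound(2)[where N=N and X=X and Y=Y and m=5, OF nX Y]) simp
    then show "v \<le> 2 ^ 5 - 1" using v by simp
  qed
  have bdd1: "bdd_above S1" using bdd_above_mono[OF bdd2 sub] .
  define r0 where "r0 = rel_proj_const (linf_norm 16) (linf_space 16) Y0"
  have r0S1: "r0 \<in> S1" unfolding S1_def r0_def using Y0_sub Y0_linf Y0_dim by blast
  have ne1: "S1 \<noteq> {}" using r0S1 by blast
  have r0ge: "5 / 59 * (11 + 6 * sqrt 5) \<le> r0"
    unfolding r0_def rel_proj_const_def
  proof (rule cInf_greatest)
    show "{op_norm_on (linf_norm 16) (linf_space 16) P |P. is_bounded_proj (linf_norm 16) (linf_space 16) Y0 P} \<noteq> {}"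
      by (rule rel_bound(1)[where N="linf_norm 16" and X="linf_space 16" and Y=Y0 and m=5,
            OF linf_norm_on Y0_sub Y0_linf Y0_dim]) simp
  next
    fix v assume "v \<in> {op_norm_on (linf_norm 16) (linf_space 16) P |P. is_bounded_proj (linf_norm 16) (linf_space 16) Y0 P}"
    then obtain P where "v = op_norm_on (linf_norm 16) (linf_space 16) P"
      and "is_bounded_proj (linf_norm 16) (linf_space 16) Y0 P" by blast
    then show "5 / 59 * (11 + 6 * sqrt 5) \<le> v" using op_lower by simp
  qed
  have "lambda_mn 5 16 \<le> lambda_abs 5"
    unfolding lambda_mn_def lambda_abs_def S1_def[symmetric] S2_def[symmetric]
    by (rule cSup_subset_mono[OF ne1 bdd2 sub])
  moreover have "5 / 59 * (11 + 6 * sqrt 5) \<le> lambda_mn 5 16"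
    unfolding lambda_mn_def S1_def[symmetric]
    using r0ge cSup_upper[OF r0S1 bdd1] by linarith
  ultimately show ?thesis by simp
qed

end
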